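(* Let $k \ge 2$ and $d \ge 1$ be integers and let $\varepsilon < 1/(k-1)$, $\delta := (k-1)\varepsilon/2$. Let $A$ and $B$ be random variables such that $A$ is uniformly distributed over $[2k]$ and, for each $a \in [2k]$, conditioned on $A=a$, $B$ is distributed according to a probability distribution $P_a$ on $[d]$ (viewed as a vector in $\mathbb{R}^d$). Assume that for all $r \in [k-1]$, $$\frac{1}{2k} \left\| \sum_{a=1}^r (P_a + P_{a+k}) - \sum_{a=r+1}^k (P_a + P_{a+k}) \right\|_1 \ge 1-\varepsilon.$$ Then $I(A:B) \ge \log k - \delta \log (k-1) - H(\delta)$.
   Context: $[m]$ denotes $\{1,\ldots,m\}$. All logarithms are base $2$. $H(\delta) := -\delta \log \delta - (1-\delta)\log(1-\delta)$ is the binary entropy function (with $0\log 0 = 0$). $I(A:B) = H(A)+H(B)-H(A,B)$ is the mutual information, where $H$ of a random variable denotes its Shannon entropy (base $2$). $\|\cdot\|_1$ is the $\ell_1$ norm on $\mathbb{R}^d$. *)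

theory Defs
  imports Complex_Main
begin

text \<open>Shannon entropy (base 2) of a finite distribution p on a finite set S,
  with the convention 0 log 0 = 0 (automatic, since 0 * x = 0).\<close>
definition shannon_entropy :: "'a set \<Rightarrow> ('a \<Rightarrow> real) \<Rightarrow> real" where
  "shannon_entropy S p = - (\<Sum>x\<in>S. p x * log 2 (p x))"

definition bin_entropy :: "real \<Rightarrow> real" where
  "bin_entropy \<delta> = - \<delta> * log 2 \<delta> - (1 - \<delta>) * log 2 (1 - \<delta>)"

definition joint_AB :: "nat \<Rightarrow> (nat \<Rightarrow> nat \<Rightarrow> real) \<Rightarrow> nat \<times> nat \<Rightarrow> real" where
  "joint_AB k P = (\<lambda>(a, b). P a b / real (2 * k))"

definition law_A :: "nat \<Rightarrow> nat \<Rightarrow> real" where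
  "law_A k = (\<lambda>a. 1 / real (2 * k))"

definition law_B :: "nat \<Rightarrow> (nat \<Rightarrow> nat \<Rightarrow> real) \<Rightarrow> nat \<Rightarrow> real" where
  "law_B k P = (\<lambda>b. \<Sum>a\<in>{1..2*k}. P a b / real (2 * k))"

definition mutual_info_AB :: "nat \<Rightarrow> nat \<Rightarrow> (nat \<Rightarrow> nat \<Rightarrow> real) \<Rightarrow> real" where
  "mutual_info_AB k d P =
     shannon_entropy {1..2*k} (law_A k) + shannon_entropy {1..d} (law_B k P)
     - shannon_entropy ({1..2*k} \<times> {1..d}) (joint_AB k P)"

end

theory Submission
  imports Defs
begin


lemma gibbs_term:
  fixes p q :: real
  assumes "p \<ge> 0" "q \<ge> 0" "p > 0 \<Longrightarrow> q > 0"
  shows "p * log 2 q - p * log 2 p \<le> (q - p) / ln 2"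
proof (cases "p = 0")
  case True then show ?thesis using assms by simp
next
  case False
  then have pp: "p > 0" using assms by simp
  then have qp: "q > 0" using assms by simp
  have "log 2 q - log 2 p = ln (q/p) / ln 2" using pp qp by (simp add: log_def ln_div diff_divide_distrib)
  also have "\<dots> \<le> (q/p - 1) / ln 2" using ln_le_minus_one[of "q/p"] qp pp
    by (intro divide_right_mono) auto
  finally have "p * (log 2 q - log 2 p) \<le> p * ((q/p - 1) / ln 2)" using pp by (intro mult_left_mono) auto
  also have "\<dots> = (q - p) / ln 2" using pp by (simp add: field_simps)
  finally show ?thesis by (simp add: right_diff_distrib)
qed

lemma gibbs:
  fixes p q :: "'a \<Rightarrow> real"
  assumes "finite S" "\<And>x. x \<in> S \<Longrightarrow> p x \<ge> 0" "\<And>x. x \<in> S \<Longrightarrow> q x \<ge> 0"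
    "\<And>x. x \<in> S \<Longrightarrow> p x > 0 \<Longrightarrow> q x > 0" "sum p S = 1" "sum q S \<le> 1"
  shows "(\<Sum>x\<in>S. p x * log 2 (q x)) \<le> (\<Sum>x\<in>S. p x * log 2 (p x))"
proof -
  have "(\<Sum>x\<in>S. p x * log 2 (q x)) - (\<Sum>x\<in>S. p x * log 2 (p x))
      = (\<Sum>x\<in>S. p x * log 2 (q x) - p x * log 2 (p x))" by (simp add: sum_subtractf)
  also have "\<dots> \<le> (\<Sum>x\<in>S. (q x - p x) / ln 2)"
    by (intro sum_mono gibbs_term) (use assms in auto)
  also have "\<dots> = (sum q S - sum p S) / ln 2" by (simp add: sum_divide_distrib[symmetric] sum_subtractf)
  also have "\<dots> \<le> 0" using assms by (intro divide_nonpos_pos) auto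
  finally show ?thesis by simp
qed

lemma median:
  fixes w :: "nat \<Rightarrow> real"
  assumes "k \<ge> 1" "\<And>i. i \<in> {1..k} \<Longrightarrow> w i \<ge> 0"
  shows "\<exists>c\<in>{1..k}. (\<Sum>i\<in>{1..k}. w i) - w c \<le>
     (\<Sum>r\<in>{1..k-1}. min (\<Sum>i\<in>{1..r}. w i) (\<Sum>i\<in>{r+1..k}. w i))"
proof -
  define L where "L r = (\<Sum>i\<in>{1..r}. w i)" for r
  define R where "R r = (\<Sum>i\<in>{r+1..k}. w i)" for r
  have LR: "L r + R r = L k" if "r \<le> k" for r
    unfolding L_def R_def using that sum.ub_add_nat[of 1 r w "k - r"] by simp
  have Lmono: "L r \<le> L s" if "r \<le> s" "s \<le> k" for r s
    unfolding L_def using that assms(2) by (intro sum_mono2) auto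
  have Rmono: "R s \<le> R r" if "r \<le> s" for r s
    unfolding R_def using that assms(2) by (intro sum_mono2) auto
  have Rk: "R k = 0" unfolding R_def by simp
  have L0: "L 0 = 0" unfolding L_def by simp
  define m where "m = (LEAST r. r \<ge> 1 \<and> L r \<ge> R r)"
  have ex: "k \<ge> 1 \<and> L k \<ge> R k" using assms Rk by (auto simp: L_def intro!: sum_nonneg)
  have m1: "m \<ge> 1 \<and> L m \<ge> R m" unfolding m_def by (rule LeastI[of _ k]) (use ex in auto)
  have mk: "m \<le> k" unfolding m_def by (rule Least_le) (use ex in auto)
  have below: "L r < R r" if "1 \<le> r" "r < m" for r
    using not_less_Least[of r "\<lambda>r. r \<ge> 1 \<and> L r \<ge> R r"] that unfolding m_def[symmetric] by auto
  have above: "L r \<ge> R r" if "m \<le> r" "r \<le> k" for r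
    using m1 Lmono[OF that] Rmono[OF that(1)] by linarith
  define g where "g r = (if r = m - 1 then L r else 0) + (if r = m then R r else 0)" for r
  have gle: "g r \<le> min (L r) (R r)" if "r \<in> {1..k-1}" for r
  proof -
    have "m - 1 \<noteq> m" using m1 by linarith
    moreover have "r = m - 1 \<Longrightarrow> L r < R r" using below[of r] that m1 by auto
    moreover have "r = m \<Longrightarrow> R r \<le> L r" using above[of r] that by auto
    moreover have "L r \<ge> 0" "R r \<ge> 0" unfolding L_def R_def using that assms(2)
      by (auto intro!: sum_nonneg)
    ultimately show ?thesis unfolding g_def
      by (cases "r = m - 1"; cases "r = m") (simp_all)
  qed
  have "(\<Sum>r\<in>{1..k-1}. g r) = (if m - 1 \<in> {1..k-1} then L (m-1) else 0) + (if m \<in> {1..k-1} then R m else 0)"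
    unfolding g_def by (simp add: sum.distrib)
  also have "\<dots> = L (m-1) + R m"
  proof -
    have a: "(if m - 1 \<in> {1..k-1} then L (m-1) else 0) = L (m-1)"
    proof (cases "m - 1 \<in> {1..k-1}")
      case False
      then have "m - 1 = 0" using mk by auto
      then show ?thesis using L0 by simp
    qed simp
    have b: "(if m \<in> {1..k-1} then R m else 0) = R m"
    proof (cases "m \<in> {1..k-1}")
      case False
      then have "m = k" using mk m1 by auto
      then show ?thesis using Rk by simp
    qed simp
    show ?thesis using a b by simp
  qed
  also have "\<dots> = L k - w m"
  proof -
    obtain n where n: "m = Suc n" using m1 by (cases m) auto
    have "L m = L (m-1) + w m" unfolding L_def n by simp
    then show ?thesis using LR[OF mk] by simp
  qed
  finally have "L k - w m \<le> (\<Sum>r\<in>{1..k-1}. min (L r) (R r))"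
    using sum_mono[of "{1..k-1}" g "\<lambda>r. min (L r) (R r)"] gle by simp
  then show ?thesis using m1 mk unfolding L_def R_def by auto
qed



lemma prodsum:
  fixes g :: "'a \<times> 'b \<Rightarrow> real"
  assumes "finite A" "finite B"
  shows "(\<Sum>x\<in>A\<times>B. g x) = (\<Sum>b\<in>B. \<Sum>a\<in>A. g (a,b))"
proof -
  have "(\<Sum>x\<in>A\<times>B. g x) = (\<Sum>a\<in>A. \<Sum>b\<in>B. g (a,b))"
    by (simp add: sum.cartesian_product)
  also have "\<dots> = (\<Sum>b\<in>B. \<Sum>a\<in>A. g (a,b))" by (rule sum.swap)
  finally show ?thesis .
qed

lemma split2k:
  fixes f :: "nat \<Rightarrow> real"
  shows "(\<Sum>a\<in>{1..2*k}. f a) = (\<Sum>c\<in>{1..k}. f c + f (c + k))"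
proof -
  have "(\<Sum>a\<in>{1..2*k}. f a) = (\<Sum>a\<in>{1..k+k}. f a)" by (simp add: mult_2)
  also have "\<dots> = (\<Sum>a\<in>{1..k}. f a) + (\<Sum>a\<in>{k+1..k+k}. f a)"
    by (rule sum.ub_add_nat) simp
  also have "(\<Sum>a\<in>{k+1..k+k}. f a) = (\<Sum>a\<in>{1..k}. f (a + k))"
    using sum.shift_bounds_cl_nat_ivl[of f 1 k k] by (simp add: add.commute)
  finally show ?thesis by (simp add: sum.distrib)
qed

lemma abs_min: "\<bar>x - y\<bar> = x + y - 2 * min x y" for x y :: real
  by (auto simp: min_def abs_if)

theorem mainTheorem2:
  fixes k d :: nat and \<epsilon> :: real and P :: "nat \<Rightarrow> nat \<Rightarrow> real"
  assumes hk: "k \<ge> 2" and hd: "d \<ge> 1"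
    and heps: "\<epsilon> < 1 / (real k - 1)"
    and Pnn: "\<And>a b. a \<in> {1..2*k} \<Longrightarrow> b \<in> {1..d} \<Longrightarrow> P a b \<ge> 0"
    and Psum: "\<And>a. a \<in> {1..2*k} \<Longrightarrow> (\<Sum>b\<in>{1..d}. P a b) = 1"
    and hsep: "\<And>r. r \<in> {1..k-1} \<Longrightarrow>
        1 / real (2 * k) *
          (\<Sum>b\<in>{1..d}. \<bar>(\<Sum>a\<in>{1..r}. P a b + P (a + k) b)
                         - (\<Sum>a\<in>{r+1..k}. P a b + P (a + k) b)\<bar>) \<ge> 1 - \<epsilon>"
  shows "mutual_info_AB k d P \<ge>
           log 2 (real k) - ((real k - 1) * \<epsilon> / 2) * log 2 (real k - 1)
           - bin_entropy ((real k - 1) * \<epsilon> / 2)"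
proof -
  define S where "S = {1..2*k}"
  define D where "D = {1..d}"
  have finS: "finite S" and finD: "finite D" unfolding S_def D_def by auto
  have kpos: "real k > 0" using hk by simp
  define w where "w b c = P c b + P (c + k) b" for b c
  define T where "T b = (\<Sum>a\<in>{1..2*k}. P a b)" for b
  define Lr where "Lr r b = (\<Sum>a\<in>{1..r}. w b a)" for r b
  define Rr where "Rr r b = (\<Sum>a\<in>{r+1..k}. w b a)" for r b
  have hT: "T b = (\<Sum>c\<in>{1..k}. w b c)" for b
    unfolding T_def w_def by (rule split2k)
  have sumT: "(\<Sum>b\<in>D. T b) = 2 * real k"
  proof -
    have "(\<Sum>b\<in>D. T b) = (\<Sum>a\<in>{1..2*k}. \<Sum>b\<in>D. P a b)"
      unfolding T_def by (rule sum.swap)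
    also have "\<dots> = (\<Sum>a\<in>{1..2*k}. 1)" using Psum unfolding D_def by simp
    finally show ?thesis by simp
  qed
  have LRT: "Lr r b + Rr r b = T b" if "r \<le> k" for r b
    unfolding Lr_def Rr_def hT using that sum.ub_add_nat[of 1 r "w b" "k - r"] by simp
  have minb: "(\<Sum>b\<in>D. min (Lr r b) (Rr r b)) \<le> real k * \<epsilon>" if r: "r \<in> {1..k-1}" for r
  proof -
    have "1 - \<epsilon> \<le> 1 / real (2 * k) * (\<Sum>b\<in>D. \<bar>Lr r b - Rr r b\<bar>)"
      using hsep[OF r] unfolding Lr_def Rr_def w_def D_def by simp
    also have "(\<Sum>b\<in>D. \<bar>Lr r b - Rr r b\<bar>) = (\<Sum>b\<in>D. T b) - 2 * (\<Sum>b\<in>D. min (Lr r b) (Rr r b))"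
    proof -
      have rk: "r \<le> k" using r by auto
      show ?thesis using LRT[OF rk] by (simp add: abs_min sum_subtractf sum_distrib_left sum.distrib)
    qed
    finally have "1 - \<epsilon> \<le> 1 / (2 * real k) * (2 * real k - 2 * (\<Sum>b\<in>D. min (Lr r b) (Rr r b)))"
      using sumT by simp
    then show ?thesis using kpos by (simp add: field_simps)
  qed
  have wnn: "w b c \<ge> 0" if "b \<in> D" "c \<in> {1..k}" for b c
    unfolding w_def using that Pnn unfolding D_def by (intro add_nonneg_nonneg Pnn) auto
  have "\<forall>b\<in>D. \<exists>c\<in>{1..k}. T b - w b c \<le> (\<Sum>r\<in>{1..k-1}. min (Lr r b) (Rr r b))"
  proof
    fix b assume b: "b \<in> D"
    show "\<exists>c\<in>{1..k}. T b - w b c \<le> (\<Sum>r\<in>{1..k-1}. min (Lr r b) (Rr r b))"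
      unfolding hT Lr_def Rr_def using hk wnn[OF b] by (intro median) auto
  qed
  then obtain chat where chat: "\<And>b. b \<in> D \<Longrightarrow> chat b \<in> {1..k}"
    and chatle: "\<And>b. b \<in> D \<Longrightarrow> T b - w b (chat b) \<le> (\<Sum>r\<in>{1..k-1}. min (Lr r b) (Rr r b))"
    by metis
  have errsum: "(\<Sum>b\<in>D. T b - w b (chat b)) \<le> real (k - 1) * (real k * \<epsilon>)"
  proof -
    have "(\<Sum>b\<in>D. T b - w b (chat b)) \<le> (\<Sum>b\<in>D. \<Sum>r\<in>{1..k-1}. min (Lr r b) (Rr r b))"
      using chatle by (rule sum_mono)
    also have "\<dots> = (\<Sum>r\<in>{1..k-1}. \<Sum>b\<in>D. min (Lr r b) (Rr r b))" by (rule sum.swap)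
    also have "\<dots> \<le> (\<Sum>r\<in>{1..k-1}. real k * \<epsilon>)" using minb by (rule sum_mono)
    finally show ?thesis by simp
  qed

  define cls where "cls a = (if a \<le> k then a else a - k)" for a
  define pAB where "pAB = joint_AB k P"
  define pB where "pB = law_B k P"
  define \<delta> where "\<delta> = (real k - 1) * \<epsilon> / 2"
  have pAB_eq: "pAB (a, b) = P a b / (2 * real k)" for a b
    unfolding pAB_def joint_AB_def by simp
  have pABnn: "pAB x \<ge> 0" if "x \<in> S \<times> D" for x
    using that Pnn unfolding S_def D_def by (cases x) (auto simp: pAB_eq)
  have pB: "pB b = (\<Sum>a\<in>S. pAB (a, b))" for b
    unfolding pB_def law_B_def S_def pAB_eq by simp
  have countc: "(\<Sum>a\<in>{1..2*k}. (if cls a = c then 0 else f a)) = (\<Sum>a\<in>{1..2*k}. f a) - (f c + f (c + k))"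
    if c: "c \<in> {1..k}" for c and f :: "nat \<Rightarrow> real"
  proof -
    have "(\<Sum>a\<in>{1..2*k}. (if cls a = c then 0 else f a))
        = (\<Sum>c'\<in>{1..k}. (if cls c' = c then 0 else f c') + (if cls (c' + k) = c then 0 else f (c' + k)))"
      by (rule split2k)
    also have "\<dots> = (\<Sum>c'\<in>{1..k}. (f c' + f (c' + k)) - (if c' = c then f c' + f (c' + k) else 0))"
      by (intro sum.cong) (auto simp: cls_def)
    also have "\<dots> = (\<Sum>a\<in>{1..2*k}. f a) - (f c + f (c + k))"
      using c split2k[of f k] by (simp add: sum_subtractf)
    finally show ?thesis .
  qed
  define Pe where "Pe = (\<Sum>x\<in>S \<times> D. (if cls (fst x) = chat (snd x) then 0 else pAB x))"
  have PeT: "Pe = (\<Sum>b\<in>D. T b - w b (chat b)) / (2 * real k)"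
  proof -
    have "Pe = (\<Sum>b\<in>D. \<Sum>a\<in>S. (if cls a = chat b then 0 else P a b / (2 * real k)))"
      unfolding Pe_def prodsum[OF finS finD] by (intro sum.cong refl) (simp add: pAB_eq)
    also have "\<dots> = (\<Sum>b\<in>D. (T b - w b (chat b)) / (2 * real k))"
    proof (intro sum.cong refl)
      fix b assume b: "b \<in> D"
      have "(\<Sum>a\<in>{1..2*k}. (if cls a = chat b then 0 else P a b / (2 * real k))) = (\<Sum>a\<in>{1..2*k}. P a b / (2 * real k)) - (P (chat b) b / (2 * real k) + P (chat b + k) b / (2 * real k))"
        by (rule countc[OF chat[OF b]])
      then show "(\<Sum>a\<in>S. (if cls a = chat b then 0 else P a b / (2 * real k))) = (T b - w b (chat b)) / (2 * real k)"
        unfolding S_def T_def w_def by (simp add: sum_divide_distrib diff_divide_distrib add_divide_distrib)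
    qed
    finally show ?thesis by (simp add: sum_divide_distrib)
  qed
  have Pe_nn: "Pe \<ge> 0" unfolding Pe_def using pABnn by (intro sum_nonneg) auto
  have Pe_le: "Pe \<le> \<delta>"
  proof -
    have "Pe \<le> real (k - 1) * (real k * \<epsilon>) / (2 * real k)"
      unfolding PeT using errsum kpos by (intro divide_right_mono) auto
    also have "\<dots> = \<delta>" unfolding \<delta>_def using kpos hk by (simp add: of_nat_diff field_simps)
    finally show ?thesis .
  qed
  have d0: "\<delta> \<ge> 0" using Pe_nn Pe_le by simp
  have dhalf: "\<delta> < 1/2"
  proof -
    have k1: "real k - 1 > 0" using hk by simp
    have "(real k - 1) * \<epsilon> < (real k - 1) * (1 / (real k - 1))"
      using heps k1 by (intro mult_strict_left_mono) auto
    then show ?thesis unfolding \<delta>_def using k1 by simp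
  qed

  have k1: "real k - 1 > 0" using hk by simp
  define \<alpha> where "\<alpha> = (1 - \<delta>) / 2"
  define \<beta> where "\<beta> = \<delta> / (2 * (real k - 1))"
  define qq where "qq x = (if cls (fst x) = chat (snd x) then \<alpha> else \<beta>)" for x
  define q where "q x = pB (snd x) * qq x" for x
  have apos: "\<alpha> > 0" unfolding \<alpha>_def using dhalf by simp
  have bnn: "\<beta> \<ge> 0" unfolding \<beta>_def using d0 k1 by simp
  have pBnn: "pB b \<ge> 0" if "b \<in> D" for b
    unfolding pB using pABnn that by (intro sum_nonneg) auto
  have psum1: "(\<Sum>x\<in>S\<times>D. pAB x) = 1"
  proof -
    have "(\<Sum>x\<in>S\<times>D. pAB x) = (\<Sum>a\<in>S. \<Sum>b\<in>D. pAB (a,b))"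
      by (simp add: sum.cartesian_product)
    also have "\<dots> = (\<Sum>a\<in>S. (\<Sum>b\<in>D. P a b) / (2 * real k))"
      by (simp add: pAB_eq sum_divide_distrib)
    also have "\<dots> = (\<Sum>a\<in>S. 1 / (2 * real k))"
      using Psum unfolding S_def D_def by simp
    also have "\<dots> = 1" unfolding S_def using kpos by simp
    finally show ?thesis .
  qed
  have sumB1: "(\<Sum>b\<in>D. pB b) = 1"
    using psum1 unfolding prodsum[OF finS finD] pB .
  have qqsum: "(\<Sum>a\<in>S. qq (a,b)) = 1" if b: "b \<in> D" for b
  proof -
    have c1: "(\<Sum>a\<in>{1..2*k}. (if cls a = chat b then 0 else (1::real))) = (\<Sum>a\<in>{1..2*k}. (1::real)) - (1 + 1)"
      using countc[OF chat[OF b], of "\<lambda>_. 1"] by simp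
    have "(\<Sum>a\<in>S. qq (a,b)) = (\<Sum>a\<in>S. \<alpha> - (\<alpha> - \<beta>) * (if cls a = chat b then 0 else 1))"
      by (intro sum.cong refl) (simp add: qq_def)
    also have "\<dots> = 2 * real k * \<alpha> - (\<alpha> - \<beta>) * (2 * real k - 2)"
      using c1 unfolding S_def by (simp add: sum_subtractf sum_distrib_left[symmetric])
    also have "\<dots> = 1" unfolding \<alpha>_def \<beta>_def using k1 by (simp add: field_simps)
    finally show ?thesis .
  qed
  have qsum: "(\<Sum>x\<in>S\<times>D. q x) = 1"
  proof -
    have "(\<Sum>x\<in>S\<times>D. q x) = (\<Sum>b\<in>D. pB b * (\<Sum>a\<in>S. qq (a,b)))"
      unfolding prodsum[OF finS finD] q_def by (simp add: sum_distrib_left)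
    also have "\<dots> = (\<Sum>b\<in>D. pB b)" using qqsum by simp
    finally show ?thesis using sumB1 by simp
  qed
  have pBge: "pB b \<ge> pAB (a, b)" if "a \<in> S" "b \<in> D" for a b
    unfolding pB using that pABnn finS by (intro member_le_sum) auto
  have ppos: "q x > 0" if x: "x \<in> S \<times> D" and px: "pAB x > 0" for x
  proof -
    obtain a b where ab: "x = (a,b)" by (cases x)
    have a: "a \<in> S" and b: "b \<in> D" using x ab by auto
    have pBp: "pB b > 0" using pBge[OF a b] px ab by simp
    have "qq x > 0"
    proof (cases "cls a = chat b")
      case True then show ?thesis using apos ab by (simp add: qq_def)
    next
      case False
      show ?thesis
      proof (cases "\<delta> = 0")
        case True
        then have "Pe = 0" using Pe_nn Pe_le by simp
        have fin: "finite (S \<times> D)" using finS finD by simp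
        have nn: "\<forall>y\<in>S \<times> D. (if cls (fst y) = chat (snd y) then 0 else pAB y) \<ge> 0"
          using pABnn by simp
        have iff: "Pe = 0 \<longleftrightarrow> (\<forall>y\<in>S \<times> D. (if cls (fst y) = chat (snd y) then 0 else pAB y) = 0)"
          unfolding Pe_def by (rule sum_nonneg_eq_0_iff[OF fin]) (use pABnn in auto)
        have "\<forall>y\<in>S \<times> D. (if cls (fst y) = chat (snd y) then 0 else pAB y) = 0"
          using iff \<open>Pe = 0\<close> by blast
        then have "(if cls (fst x) = chat (snd x) then 0 else pAB x) = 0" using x by blast
        then show ?thesis using False ab px by simp
      next
        case False': False
        then have "\<beta> > 0" unfolding \<beta>_def using d0 k1 by simp
        then show ?thesis using False ab by (simp add: qq_def)
      qed
    qed
    then show ?thesis unfolding q_def using pBp ab by simp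
  qed
  have qnn: "q x \<ge> 0" if "x \<in> S \<times> D" for x
    unfolding q_def qq_def using that pBnn apos bnn by auto
  have gib: "(\<Sum>x\<in>S\<times>D. pAB x * log 2 (q x)) \<le> (\<Sum>x\<in>S\<times>D. pAB x * log 2 (pAB x))"
    using finS finD pABnn qnn ppos psum1 qsum by (intro gibbs) auto
  have split: "(\<Sum>x\<in>S\<times>D. pAB x * log 2 (q x))
      = (\<Sum>x\<in>S\<times>D. pAB x * log 2 (pB (snd x))) + (\<Sum>x\<in>S\<times>D. pAB x * log 2 (qq x))"
  proof -
    have "pAB x * log 2 (q x) = pAB x * log 2 (pB (snd x)) + pAB x * log 2 (qq x)"
      if x: "x \<in> S \<times> D" for x
    proof (cases "pAB x > 0")
      case True
      have "q x > 0" using ppos[OF x True] .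
      have pBp: "pB (snd x) > 0" using pBge[of "fst x" "snd x"] x True by (cases x) auto
      have "qq x > 0" using \<open>q x > 0\<close> pBp unfolding q_def by (simp add: zero_less_mult_iff)
      then show ?thesis unfolding q_def using pBp by (simp add: log_mult distrib_left)
    next
      case False
      then have "pAB x = 0" using pABnn[OF x] by simp
      then show ?thesis by simp
    qed
    then show ?thesis by (simp add: sum.distrib)
  qed
  have HB: "(\<Sum>x\<in>S\<times>D. pAB x * log 2 (pB (snd x))) = (\<Sum>b\<in>D. pB b * log 2 (pB b))"
    unfolding prodsum[OF finS finD] pB by (simp add: sum_distrib_right)
  have Hqq: "(\<Sum>x\<in>S\<times>D. pAB x * log 2 (qq x)) = log 2 \<alpha> + (log 2 \<beta> - log 2 \<alpha>) * Pe"
  proof -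
    have "(\<Sum>x\<in>S\<times>D. pAB x * log 2 (qq x)) = (\<Sum>x\<in>S\<times>D. log 2 \<alpha> * pAB x + (log 2 \<beta> - log 2 \<alpha>) * (if cls (fst x) = chat (snd x) then 0 else pAB x))"
      by (intro sum.cong refl) (simp add: qq_def algebra_simps)
    also have "\<dots> = log 2 \<alpha> * (\<Sum>x\<in>S\<times>D. pAB x) + (log 2 \<beta> - log 2 \<alpha>) * Pe"
      unfolding Pe_def by (simp add: sum.distrib sum_distrib_left)
    finally show ?thesis using psum1 by simp
  qed
  have HA: "shannon_entropy {1..2*k} (law_A k) = log 2 (2 * real k)"
  proof -
    have "shannon_entropy {1..2*k} (law_A k) = - (2 * real k) * (1 / (2 * real k) * log 2 (1 / (2 * real k)))"
      unfolding shannon_entropy_def law_A_def by simp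
    also have "\<dots> = - log 2 (1 / (2 * real k))" using kpos by simp
    also have "\<dots> = log 2 (2 * real k)" using kpos by (simp add: log_divide)
    finally show ?thesis .
  qed
  have MI: "mutual_info_AB k d P \<ge> log 2 (2 * real k) + log 2 \<alpha> + (log 2 \<beta> - log 2 \<alpha>) * Pe"
  proof -
    have "mutual_info_AB k d P = log 2 (2 * real k) - (\<Sum>b\<in>D. pB b * log 2 (pB b)) + (\<Sum>x\<in>S\<times>D. pAB x * log 2 (pAB x))"
      unfolding mutual_info_AB_def HA unfolding shannon_entropy_def pB_def[symmetric] pAB_def[symmetric] S_def D_def by simp
    then show ?thesis using gib split HB Hqq by linarith
  qed
  have l2k: "log 2 (2 * real k) = 1 + log 2 (real k)" using kpos by (simp add: log_mult)
  show ?thesis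
  proof (cases "\<delta> = 0")
    case True
    then have "Pe = 0" using Pe_nn Pe_le by simp
    moreover have "log 2 \<alpha> = -1" unfolding \<alpha>_def True by (simp add: log_divide)
    moreover have "bin_entropy 0 = 0" unfolding bin_entropy_def by simp
    ultimately show ?thesis using MI l2k True unfolding \<delta>_def[symmetric] by simp
  next
    case False
    then have dp: "\<delta> > 0" using d0 by simp
    have la: "log 2 \<alpha> = log 2 (1 - \<delta>) - 1" unfolding \<alpha>_def using dhalf by (simp add: log_divide)
    have l2: "log 2 (2 * (real k - 1)) = 1 + log 2 (real k - 1)" using k1 by (subst log_mult) auto
    have "log 2 \<beta> = log 2 \<delta> - log 2 (2 * (real k - 1))" unfolding \<beta>_def using dp k1
      by (intro log_divide_pos) auto
    then have lb: "log 2 \<beta> = log 2 \<delta> - 1 - log 2 (real k - 1)" using l2 by simp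
    define X where "X = log 2 (1 - \<delta>) - log 2 \<delta> + log 2 (real k - 1)"
    have "log 2 \<delta> \<le> log 2 (1 - \<delta>)" using dp dhalf by simp
    moreover have "log 2 (real k - 1) \<ge> 0" using hk by simp
    ultimately have X0: "X \<ge> 0" unfolding X_def by simp
    have PX: "Pe * X \<le> \<delta> * X" using Pe_le X0 by (rule mult_right_mono)
    have "log 2 (real k) - \<delta> * log 2 (real k - 1) - bin_entropy \<delta>
        = log 2 (real k) + log 2 (1 - \<delta>) - \<delta> * X"
      unfolding bin_entropy_def X_def by (simp add: algebra_simps)
    also have "\<dots> \<le> log 2 (real k) + log 2 (1 - \<delta>) - Pe * X" using PX by simp
    also have "\<dots> = log 2 (2 * real k) + log 2 \<alpha> + (log 2 \<beta> - log 2 \<alpha>) * Pe"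
      unfolding l2k la lb X_def by (simp add: algebra_simps)
    finally show ?thesis using MI unfolding \<delta>_def by simp
  qed

qed

end
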